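(* Let $R$ be an integral domain, $f \in R[X]$ a monic polynomial, and $f = \prod_{i=1}^n f_i$ a factorisation of $f$ into monic polynomials $f_i \in R[X]$. Let $\Psi_f : R[X]/(f) \to \bigoplus_{i=1}^n R[X]/(f_i)$ be the natural map $h \bmod f \mapsto \bigoplus_i h \bmod f_i$. Then the determinant of $\Psi_f$ written with respect to the standard bases is \[\det(\Psi_f) = \prod_{1 \le i < j \le n}\mathcal{R}(f_j, f_i).\]
   Context: The standard basis of $R[X]/(g)$ for monic $g$ of degree $d$ is $(1, \overline{X}, \dots, \overline{X}^{d-1})$; the summands of $\bigoplus_{i=1}^n R[X]/(f_i)$ are taken in the order $i = 1, \dots, n$. For monic polynomials $g,h$, the resultant is $\mathcal{R}(g,h) = \prod_{\alpha}\prod_{\beta}(\alpha-\beta)$, the product over the roots $\alpha$ of $g$ and $\beta$ of $h$ (with multiplicity) in an algebraic closure of the fraction field of $R$; it lies in $R$. *)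

theory Defs
  imports "Subresultants.Resultant_Prelim"
begin

text \<open>Offset of the i-th summand in the concatenated standard basis of
  the direct sum of the R[X]/(f_i), i = 0..n-1 (0-based).\<close>
definition block_off :: "'a::zero poly list \<Rightarrow> nat \<Rightarrow> nat" where
  "block_off fs i = sum_list (map degree (take i fs))"

text \<open>Matrix of Psi_f : R[X]/(f) -> (+)_i R[X]/(f_i), f = prod fs, w.r.t. the standard
  bases. Column c is the image of X^c (c < deg f); the row r lies in the block i with
  block_off fs i \<le> r < block_off fs (i+1) and gives the coefficient of X^(r - block_off fs i)
  of the remainder of X^c modulo f_i. For monic f_i the library's pseudo_mod is exactly
  the Euclidean remainder. The size is sum of deg f_i = deg f (the f_i are monic).\<close>
definition psi_mat :: "'a::idom poly list \<Rightarrow> 'a mat" where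
  "psi_mat fs =
     mat (sum_list (map degree fs)) (sum_list (map degree fs))
       (\<lambda>(r, c). let i = (THE i. i < length fs \<and> block_off fs i \<le> r \<and> r < block_off fs (Suc i))
                 in coeff (pseudo_mod (monom 1 c) (fs ! i)) (r - block_off fs i))"

end

theory Submission
  imports Defs "Subresultants.Subresultant"
begin

lemma pmod_spec:
  fixes g p :: "'a::idom poly"
  assumes g: "lead_coeff g = 1"
  shows "g dvd (p - pseudo_mod p g)" "pseudo_mod p g = 0 \<or> degree (pseudo_mod p g) < degree g"
proof -
  have g0: "g \<noteq> 0" using g by auto
  obtain q r where pdm: "pseudo_divmod p g = (q, r)" by (cases "pseudo_divmod p g") auto
  have r: "pseudo_mod p g = r" using pdm by (simp add: pseudo_mod_def)
  from pseudo_divmod[OF g0 pdm] g have "p = g * q + r" "r = 0 \<or> degree r < degree g" by auto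
  then show "g dvd (p - pseudo_mod p g)" "pseudo_mod p g = 0 \<or> degree (pseudo_mod p g) < degree g"
    unfolding r by auto
qed

lemma pmod_unique:
  fixes g p r :: "'a::idom poly"
  assumes g: "lead_coeff g = 1" and r: "r = 0 \<or> degree r < degree g" and d: "g dvd (p - r)"
  shows "pseudo_mod p g = r"
proof (rule ccontr)
  let ?r = "pseudo_mod p g"
  assume ne: "?r \<noteq> r"
  have "g dvd (p - ?r)" using pmod_spec[OF g] by auto
  have eq: "?r - r = (p - r) - (p - ?r)" by simp
  have dv: "g dvd (?r - r)" unfolding eq by (rule dvd_diff[OF d \<open>g dvd (p - ?r)\<close>])
  have nz: "?r - r \<noteq> 0" using ne by auto
  have "degree (?r - r) < degree g"
  proof -
    have "degree (?r - r) \<le> max (degree ?r) (degree r)" by (rule degree_diff_le_max)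
    moreover have "?r = 0 \<or> degree ?r < degree g" using pmod_spec[OF g] by auto
    ultimately show ?thesis using r nz by auto
  qed
  with dvd_imp_degree_le[OF dv nz] show False by auto
qed

lemma pmod_small:
  fixes g p :: "'a::idom poly"
  assumes g: "lead_coeff g = 1" and "degree p < degree g"
  shows "pseudo_mod p g = p"
  by (rule pmod_unique[OF g]) (use assms in auto)

lemma pmod_multiple:
  fixes g p :: "'a::idom poly"
  assumes g: "lead_coeff g = 1" and "g dvd p"
  shows "pseudo_mod p g = 0"
  by (rule pmod_unique[OF g]) (use assms in auto)

lemma pmod_add:
  fixes g p q :: "'a::idom poly"
  assumes g: "lead_coeff g = 1"
  shows "pseudo_mod (p + q) g = pseudo_mod p g + pseudo_mod q g"
proof (rule pmod_unique[OF g])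
  have a: "pseudo_mod p g = 0 \<or> degree (pseudo_mod p g) < degree g"
   and b: "pseudo_mod q g = 0 \<or> degree (pseudo_mod q g) < degree g" using pmod_spec[OF g] by auto
  have "degree (pseudo_mod p g + pseudo_mod q g) \<le> max (degree (pseudo_mod p g)) (degree (pseudo_mod q g))"
    by (rule degree_add_le_max)
  then show "pseudo_mod p g + pseudo_mod q g = 0 \<or> degree (pseudo_mod p g + pseudo_mod q g) < degree g"
    using a b by (cases "pseudo_mod p g + pseudo_mod q g = 0") auto
  have eq: "p + q - (pseudo_mod p g + pseudo_mod q g) = (p - pseudo_mod p g) + (q - pseudo_mod q g)" by simp
  show "g dvd (p + q - (pseudo_mod p g + pseudo_mod q g))"
    unfolding eq by (rule dvd_add[OF pmod_spec(1)[OF g, of p] pmod_spec(1)[OF g, of q]])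
qed

lemma pmod_smult:
  fixes g p :: "'a::idom poly"
  assumes g: "lead_coeff g = 1"
  shows "pseudo_mod (smult c p) g = smult c (pseudo_mod p g)"
proof (rule pmod_unique[OF g])
  show "smult c (pseudo_mod p g) = 0 \<or> degree (smult c (pseudo_mod p g)) < degree g"
    using pmod_spec(2)[OF g, of p] by (metis degree_smult_le le_less_trans smult_0_right)
  have "g dvd smult c (p - pseudo_mod p g)" by (rule dvd_smult[OF pmod_spec(1)[OF g]])
  then show "g dvd (smult c p - smult c (pseudo_mod p g))" by (simp add: smult_diff_right)
qed

lemma pmod_0: 
  fixes g :: "'a::idom poly"
  assumes g: "lead_coeff g = 1"
  shows "pseudo_mod 0 g = 0"
  using pmod_multiple[OF g] by simp

lemma pmod_sum:
  fixes g :: "'a::idom poly"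
  assumes g: "lead_coeff g = 1"
  shows "pseudo_mod (\<Sum>t\<in>T. f t) g = (\<Sum>t\<in>T. pseudo_mod (f t) g)"
proof (induction T rule: infinite_finite_induct)
  case (infinite A) then show ?case using pmod_0[OF g] by simp
next
  case empty then show ?case using pmod_0[OF g] by simp
next
  case (insert x F) then show ?case by (simp add: pmod_add[OF g])
qed

lemma pmod_mod_dvd:
  fixes f G p :: "'a::idom poly"
  assumes f: "lead_coeff f = 1" and G: "lead_coeff G = 1" and fG: "f dvd G"
  shows "pseudo_mod (pseudo_mod p G) f = pseudo_mod p f"
proof (rule pmod_unique[OF f])
  show "pseudo_mod p f = 0 \<or> degree (pseudo_mod p f) < degree f" using pmod_spec(2)[OF f] .
  have eq: "pseudo_mod p G - pseudo_mod p f = (p - pseudo_mod p f) - (p - pseudo_mod p G)" by simp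
  show "f dvd (pseudo_mod p G - pseudo_mod p f)"
    unfolding eq by (rule dvd_diff[OF pmod_spec(1)[OF f, of p] dvd_trans[OF fG pmod_spec(1)[OF G, of p]]])
qed

lemma pmod_mult_mod:
  fixes g a p :: "'a::idom poly"
  assumes g: "lead_coeff g = 1"
  shows "pseudo_mod (a * pseudo_mod p g) g = pseudo_mod (a * p) g"
proof (rule pmod_unique[OF g])
  show "pseudo_mod (a * p) g = 0 \<or> degree (pseudo_mod (a * p) g) < degree g" using pmod_spec(2)[OF g] .
  have eq: "a * pseudo_mod p g - pseudo_mod (a * p) g = (a * p - pseudo_mod (a * p) g) - a * (p - pseudo_mod p g)"
    by (simp add: algebra_simps)
  show "g dvd (a * pseudo_mod p g - pseudo_mod (a * p) g)"
    unfolding eq by (rule dvd_diff[OF pmod_spec(1)[OF g, of "a*p"] dvd_mult[OF pmod_spec(1)[OF g, of p], of a]])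
qed


lemma mult_mat_index_sum:
  assumes A: "A \<in> carrier_mat n k" and B: "B \<in> carrier_mat k m" and i: "i < n" and j: "j < m"
  shows "(A * B) $$ (i,j) = (\<Sum>l<k. A $$ (i,l) * B $$ (l,j))"
  using A B i j by (simp add: scalar_prod_def lessThan_atLeast0)

lemma sum_indicator_eq:
  fixes f :: "nat \<Rightarrow> 'a::comm_ring_1"
  assumes "a < k"
  shows "(\<Sum>l<k. (if l = a then 1 else 0) * f l) = f a"
proof -
  have "(\<Sum>l<k. (if l = a then 1 else 0) * f l) = (\<Sum>l<k. if l = a then f l else 0)"
    by (rule sum.cong) auto
  then show ?thesis using assms by simp
qed

definition revm :: "nat \<Rightarrow> 'a::comm_ring_1 mat" where
  "revm N = mat N N (\<lambda>(i,j). if i + j = N - 1 then 1 else 0)"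

lemma revm_carrier: "revm N \<in> carrier_mat N N" by (simp add: revm_def)

lemma revm_mult_left:
  assumes A: "A \<in> carrier_mat N M" and i: "i < N" and j: "j < M"
  shows "(revm N * A) $$ (i,j) = A $$ (N-1-i, j)"
proof -
  have "(revm N * A) $$ (i,j) = (\<Sum>l<N. revm N $$ (i,l) * A $$ (l,j))"
    by (rule mult_mat_index_sum[OF revm_carrier A i j])
  also have "\<dots> = (\<Sum>l<N. (if l = N - 1 - i then 1 else 0) * A $$ (l,j))"
    by (rule sum.cong) (use i in \<open>auto simp: revm_def\<close>)
  also have "\<dots> = A $$ (N-1-i, j)" by (rule sum_indicator_eq) (use i in auto)
  finally show ?thesis .
qed

lemma revm_mult_right:
  assumes A: "A \<in> carrier_mat M N" and i: "i < M" and j: "j < N"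
  shows "(A * revm N) $$ (i,j) = A $$ (i, N-1-j)"
proof -
  have "(A * revm N) $$ (i,j) = (\<Sum>l<N. A $$ (i,l) * revm N $$ (l,j))"
    by (rule mult_mat_index_sum[OF A revm_carrier i j])
  also have "\<dots> = (\<Sum>l<N. (if l = N - 1 - j then 1 else 0) * A $$ (i,l))"
    by (rule sum.cong) (use j in \<open>auto simp: revm_def\<close>)
  also have "\<dots> = A $$ (i, N-1-j)" by (rule sum_indicator_eq) (use j in auto)
  finally show ?thesis .
qed

lemma revm_sq: "revm N * revm N = (1\<^sub>m N :: 'a::comm_ring_1 mat)"
proof (rule eq_matI)
  fix i j assume "i < dim_row (1\<^sub>m N :: 'a mat)" "j < dim_col (1\<^sub>m N :: 'a mat)"
  then have i: "i < N" and j: "j < N" by auto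
  show "(revm N * revm N) $$ (i,j) = (1\<^sub>m N :: 'a mat) $$ (i,j)"
    unfolding revm_mult_left[OF revm_carrier i j] using i j by (auto simp: revm_def)
qed (auto simp: revm_def)

lemma det_rev:
  fixes A :: "'a::comm_ring_1 mat"
  assumes A: "A \<in> carrier_mat N N"
  shows "det (mat N N (\<lambda>(i,j). A $$ (N-1-i, N-1-j))) = det A"
proof -
  have eq: "mat N N (\<lambda>(i,j). A $$ (N-1-i, N-1-j)) = revm N * A * revm N"
  proof (rule eq_matI)
    fix i j assume "i < dim_row (revm N * A * revm N)" "j < dim_col (revm N * A * revm N)"
    then have i: "i < N" and j: "j < N" using A by (auto simp: revm_def)
    have c: "revm N * A \<in> carrier_mat N N" using mult_carrier_mat[OF revm_carrier A] .
    show "mat N N (\<lambda>(i,j). A $$ (N-1-i, N-1-j)) $$ (i,j) = (revm N * A * revm N) $$ (i,j)"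
    proof -
      have j': "N - 1 - j < N" using j by auto
      show ?thesis unfolding revm_mult_right[OF c i j] revm_mult_left[OF A i j'] using i j by auto
    qed
  qed (use A in \<open>auto simp: revm_def\<close>)
  have "det (revm N * A * revm N) = det (revm N :: 'a mat) * det A * det (revm N :: 'a mat)"
    using det_mult[OF mult_carrier_mat[OF revm_carrier A] revm_carrier] det_mult[OF revm_carrier A] by simp
  also have "\<dots> = det (revm N * revm N :: 'a mat) * det A"
    by (subst det_mult[OF revm_carrier revm_carrier]) (simp add: algebra_simps)
  also have "\<dots> = det A" by (simp add: revm_sq)
  finally show ?thesis unfolding eq .
qed

lemma poly_sum_monom:
  fixes Q :: "'a::comm_ring_1 poly"
  assumes "\<forall>k\<ge>n. coeff Q k = 0"
  shows "Q = (\<Sum>k<n. monom (coeff Q k) k)"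
proof (rule poly_eqI)
  fix t
  have "coeff (\<Sum>k<n. monom (coeff Q k) k) t = (\<Sum>k<n. if k = t then coeff Q k else 0)"
    by (simp add: coeff_sum coeff_monom)
  also have "\<dots> = coeff Q t" using assms by (auto simp: sum.delta' )
  finally show "coeff Q t = coeff (\<Sum>k<n. monom (coeff Q k) k) t" by simp
qed

lemma coeff_mult_sum:
  fixes Q p :: "'a::comm_ring_1 poly"
  assumes "\<forall>k\<ge>n. coeff Q k = 0"
  shows "coeff (Q * p) j = (\<Sum>k<n. coeff Q k * coeff (monom 1 k * p) j)"
proof -
  have "Q * p = (\<Sum>k<n. monom (coeff Q k) k) * p" using poly_sum_monom[OF assms] by simp
  also have "\<dots> = (\<Sum>k<n. smult (coeff Q k) (monom 1 k * p))"
  proof -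
    have "\<And>k. monom (coeff Q k) k * p = smult (coeff Q k) (monom 1 k * p)"
    proof -
      fix k
      have "smult (coeff Q k) (monom 1 k * p) = smult (coeff Q k) (monom 1 k) * p" by simp
      also have "smult (coeff Q k) (monom 1 k) = monom (coeff Q k) k" by (simp add: smult_monom)
      finally show "monom (coeff Q k) k * p = smult (coeff Q k) (monom 1 k * p)" by simp
    qed
    then show ?thesis by (simp add: sum_distrib_right)
  qed
  finally show ?thesis by (simp add: coeff_sum)
qed


lemma sum_split_add:
  fixes f :: "nat \<Rightarrow> 'a::comm_monoid_add"
  shows "(\<Sum>l<m+n. f l) = (\<Sum>l<m. f l) + (\<Sum>k<n. f (m+k))"
  by (induction n) (auto simp: add.assoc)

lemma coeff_monom1_Suc:
  fixes p :: "'a::comm_semiring_1 poly"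
  shows "coeff (monom 1 (Suc a) * p) (Suc b) = coeff (monom 1 a * p) b"
  by (simp add: coeff_monom_mult)

definition multmat :: "'a::idom poly \<Rightarrow> 'a poly \<Rightarrow> 'a mat" where
  "multmat p q = mat (degree p) (degree p) (\<lambda>(s,k). coeff (pseudo_mod (monom 1 k * q) p) s)"

lemma resultant_multmat:
  fixes p q :: "'a::idom poly"
  assumes p: "lead_coeff p = 1"
  shows "resultant p q = det (multmat p q)"
proof -
  define m where "m = degree p"
  define n where "n = degree q"
  define N where "N = m + n"
  define S where "S = sylvester_mat p q"
  have S: "S \<in> carrier_mat N N" unfolding S_def N_def m_def n_def by (simp add: sylvester_carrier_mat)
  define r where "r i = pseudo_mod (monom 1 i * q) p" for i
  define S' where "S' = (mat N N (\<lambda>(i,j). if i < m then coeff (monom 1 i * q) j else coeff (monom 1 (i-m) * p) j) :: 'a mat)"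
  have S'S: "mat N N (\<lambda>(i,j). S $$ (N-1-i, N-1-j)) = S'"
  proof (rule eq_matI)
    fix i j assume "i < dim_row S'" "j < dim_col S'"
    then have i: "i < N" and j: "j < N" by (auto simp: S'_def)
    have i': "N-1-i < m + n" and j': "N-1-j < m + n" using i j by (auto simp: N_def)
    have e1: "m + n - (N - 1 - j) = Suc j" using j by (auto simp: N_def)
    have sx: "S $$ (N-1-i, N-1-j) = (if N-1-i < n then coeff (monom 1 (n - (N-1-i)) * p) (m+n-(N-1-j))
        else coeff (monom 1 (m+n-(N-1-i)) * q) (m+n-(N-1-j)))"
      unfolding S_def m_def n_def by (rule sylvester_index_mat2) (use i' j' in \<open>auto simp: m_def n_def\<close>)
    have mx: "mat N N (\<lambda>(i,j). S $$ (N-1-i, N-1-j)) $$ (i,j) = S $$ (N-1-i, N-1-j)" using i j by simp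
    show "mat N N (\<lambda>(i,j). S $$ (N-1-i, N-1-j)) $$ (i,j) = S' $$ (i,j)"
    proof (cases "i < m")
      case True
      then have c: "\<not> N-1-i < n" "m + n - (N-1-i) = Suc i" using i by (auto simp: N_def)
      have "S $$ (N-1-i, N-1-j) = coeff (monom 1 (Suc i) * q) (Suc j)" unfolding sx e1 using c by simp
      then show ?thesis unfolding mx using i j True
        by (simp add: S'_def coeff_monom1_Suc)
    next
      case False
      then have c: "N-1-i < n" "n - (N-1-i) = Suc (i - m)" using i by (auto simp: N_def)
      have "S $$ (N-1-i, N-1-j) = coeff (monom 1 (Suc (i - m)) * p) (Suc j)" unfolding sx e1 using c by simp
      then show ?thesis unfolding mx using i j False
        by (simp add: S'_def coeff_monom1_Suc)
    qed
  qed (auto simp: S'_def)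
  have detS': "det S' = resultant p q"
    using det_rev[OF S] unfolding S'S by (simp add: resultant_def S_def)
  define Q where "Q i = (SOME d. monom 1 i * q - r i = p * d)" for i
  have Qspec: "monom 1 i * q - r i = p * Q i" for i
  proof -
    have "p dvd (monom 1 i * q - r i)" unfolding r_def by (rule pmod_spec(1)[OF p])
    then obtain d where "monom 1 i * q - r i = p * d" unfolding dvd_def by blast
    then show ?thesis unfolding Q_def by (rule someI)
  qed
  have rdeg: "r i = 0 \<or> degree (r i) < m" for i unfolding r_def m_def by (rule pmod_spec(2)[OF p])
  have rcoeff: "coeff (r i) j = 0" if "j \<ge> m" for i j
    using rdeg[of i] that by (auto intro: coeff_eq_0)
  have Qdeg: "\<forall>k\<ge>n. coeff (Q i) k = 0" if i: "i < m" for i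
  proof (cases "Q i = 0")
    case True then show ?thesis by simp
  next
    case False
    have p0: "p \<noteq> 0" using p by auto
    have "degree (p * Q i) = m + degree (Q i)" using degree_mult_eq[OF p0 False] m_def by simp
    moreover have "degree (monom 1 i * q - r i) < m + n"
    proof -
      have "degree (monom 1 i * q) \<le> i + n"
        using degree_mult_le[of "monom 1 i" q] degree_monom_le[of "1::'a" i] n_def by simp
      moreover have "degree (r i) < m + n \<or> r i = 0" using rdeg[of i] by auto
      ultimately show ?thesis using degree_diff_le_max[of "monom 1 i * q" "r i"] i by auto
    qed
    ultimately have "degree (Q i) < n" using Qspec[of i] by simp
    then show ?thesis by (auto intro: coeff_eq_0)
  qed
  define B where "B = (mat N N (\<lambda>(i,j). if i < m then coeff (r i) j else coeff (monom 1 (i-m) * p) j) :: 'a mat)"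
  define E where "E = (mat N N (\<lambda>(i,l). if i < m \<and> m \<le> l then coeff (Q i) (l - m) else if l = i then 1 else 0) :: 'a mat)"
  have B: "B \<in> carrier_mat N N" and E: "E \<in> carrier_mat N N" by (auto simp: B_def E_def)
  have S'EB: "S' = E * B"
  proof (rule eq_matI)
    fix i j assume "i < dim_row (E * B)" "j < dim_col (E * B)"
    then have i: "i < N" and j: "j < N" by (auto simp: E_def B_def)
    have "(E * B) $$ (i,j) = (\<Sum>l<N. E $$ (i,l) * B $$ (l,j))" by (rule mult_mat_index_sum[OF E B i j])
    also have "\<dots> = S' $$ (i,j)"
    proof (cases "i < m")
      case False
      have "(\<Sum>l<N. E $$ (i,l) * B $$ (l,j)) = (\<Sum>l<N. (if l = i then 1 else 0) * B $$ (l,j))"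
        by (rule sum.cong) (use False i in \<open>auto simp: E_def\<close>)
      also have "\<dots> = B $$ (i,j)" by (rule sum_indicator_eq[OF i])
      finally show ?thesis using False i j by (simp add: B_def S'_def)
    next
      case True
      have "(\<Sum>l<N. E $$ (i,l) * B $$ (l,j)) = (\<Sum>l<m. E $$ (i,l) * B $$ (l,j)) + (\<Sum>k<n. E $$ (i,m+k) * B $$ (m+k,j))"
        unfolding N_def by (rule sum_split_add)
      also have "(\<Sum>l<m. E $$ (i,l) * B $$ (l,j)) = (\<Sum>l<m. (if l = i then 1 else 0) * B $$ (l,j))"
        by (rule sum.cong) (use True in \<open>auto simp: E_def N_def\<close>)
      also have "\<dots> = B $$ (i,j)" by (rule sum_indicator_eq[OF True])
      also have "\<dots> = coeff (r i) j" using True i j by (simp add: B_def)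
      also have "(\<Sum>k<n. E $$ (i,m+k) * B $$ (m+k,j)) = (\<Sum>k<n. coeff (Q i) k * coeff (monom 1 k * p) j)"
        by (rule sum.cong) (use True j in \<open>auto simp: E_def B_def N_def\<close>)
      also have "\<dots> = coeff (Q i * p) j" by (rule coeff_mult_sum[symmetric, OF Qdeg[OF True]])
      also have "coeff (r i) j + coeff (Q i * p) j = coeff (monom 1 i * q) j"
        using Qspec[of i] by (metis add_diff_cancel_left' coeff_add diff_add_cancel mult.commute)
      finally show ?thesis using True i j by (simp add: S'_def)
    qed
    finally show "S' $$ (i,j) = (E * B) $$ (i,j)" by simp
  qed (auto simp: S'_def E_def B_def)
  have detE: "det E = 1"
  proof -
    have ut: "upper_triangular E" unfolding upper_triangular_def E_def by auto
    have "det E = prod_list (diag_mat E)" by (rule det_upper_triangular[OF ut E])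
    also have "\<dots> = (\<Prod>i = 0 ..< N. E $$ (i,i))" by (simp add: prod_list_diag_prod E_def)
    also have "\<dots> = (\<Prod>i = 0 ..< N. 1)" by (rule prod.cong) (auto simp: E_def)
    finally show ?thesis by simp
  qed
  define A1 where "A1 = transpose_mat (multmat p q)"
  define A3 where "A3 = (mat n m (\<lambda>(i,j). coeff (monom 1 i * p) j) :: 'a mat)"
  define A4 where "A4 = (mat n n (\<lambda>(i,j). coeff (monom 1 i * p) (m + j)) :: 'a mat)"
  have A1: "A1 \<in> carrier_mat m m" by (simp add: A1_def multmat_def m_def)
  have A3: "A3 \<in> carrier_mat n m" and A4: "A4 \<in> carrier_mat n n" by (auto simp: A3_def A4_def)
  have Bblock: "B = four_block_mat A1 (0\<^sub>m m n) A3 A4"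
  proof (rule eq_matI)
    fix i j assume "i < dim_row (four_block_mat A1 (0\<^sub>m m n) A3 A4)" "j < dim_col (four_block_mat A1 (0\<^sub>m m n) A3 A4)"
    then have i: "i < m + n" and j: "j < m + n" using A1 A4 by auto
    show "B $$ (i,j) = four_block_mat A1 (0\<^sub>m m n) A3 A4 $$ (i,j)"
      using i j A1 A4 rcoeff[of j i]
      by (auto simp: B_def N_def A1_def A3_def A4_def multmat_def m_def[symmetric] r_def[symmetric])
  qed (use A1 A4 in \<open>auto simp: B_def N_def\<close>)
  have detA4: "det A4 = 1"
  proof -
    have "det A4 = prod_list (diag_mat A4)"
    proof (rule det_lower_triangular[OF _ A4])
      fix i j assume "i < j" "j < n"
      then show "A4 $$ (i,j) = 0" by (auto simp: A4_def coeff_monom_mult m_def intro: coeff_eq_0)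
    qed
    also have "\<dots> = (\<Prod>i = 0 ..< n. A4 $$ (i,i))" by (simp add: prod_list_diag_prod A4_def)
    also have "\<dots> = (\<Prod>i = 0 ..< n. 1)"
      by (rule prod.cong) (use p in \<open>auto simp: A4_def coeff_monom_mult m_def\<close>)
    finally show ?thesis by simp
  qed
  have "resultant p q = det (E * B)" using detS' S'EB by simp
  also have "\<dots> = det B" using det_mult[OF E B] detE by simp
  also have "\<dots> = det A1 * det A4" unfolding Bblock
    by (rule det_four_block_mat_upper_right_zero[OF A1 refl A3 A4])
  also have "\<dots> = det (multmat p q)" unfolding detA4 A1_def
    by (simp add: det_transpose[of _ m] multmat_def m_def)
  finally show ?thesis .
qed


lemma multmat_mult:
  fixes p a b :: "'a::idom poly"
  assumes p: "lead_coeff p = 1"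
  shows "multmat p (a * b) = multmat p a * multmat p b"
proof (rule eq_matI)
  let ?m = "degree p"
  fix s k assume "s < dim_row (multmat p a * multmat p b)" "k < dim_col (multmat p a * multmat p b)"
  then have s: "s < ?m" and k: "k < ?m" by (auto simp: multmat_def)
  define r where "r = pseudo_mod (monom 1 k * b) p"
  have rz: "\<forall>t\<ge>?m. coeff r t = 0" using pmod_spec(2)[OF p, of "monom 1 k * b"]
    by (auto simp: r_def intro: coeff_eq_0)
  have "(multmat p a * multmat p b) $$ (s,k) = (\<Sum>t<?m. multmat p a $$ (s,t) * multmat p b $$ (t,k))"
    by (rule mult_mat_index_sum[OF _ _ s k]) (auto simp: multmat_def)
  also have "\<dots> = (\<Sum>t<?m. coeff r t * coeff (pseudo_mod (monom 1 t * a) p) s)"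
    by (rule sum.cong) (use s k in \<open>auto simp: multmat_def r_def\<close>)
  also have "\<dots> = coeff (\<Sum>t<?m. smult (coeff r t) (pseudo_mod (monom 1 t * a) p)) s"
    by (simp add: coeff_sum)
  also have "(\<Sum>t<?m. smult (coeff r t) (pseudo_mod (monom 1 t * a) p)) = pseudo_mod (\<Sum>t<?m. smult (coeff r t) (monom 1 t * a)) p"
    by (simp add: pmod_sum[OF p] pmod_smult[OF p])
  also have "(\<Sum>t<?m. smult (coeff r t) (monom 1 t * a)) = a * r"
  proof -
    have "a * r = a * (\<Sum>t<?m. monom (coeff r t) t)" using poly_sum_monom[OF rz] by simp
    also have "\<dots> = (\<Sum>t<?m. smult (coeff r t) (monom 1 t * a))"
    proof -
      have "\<And>t. a * monom (coeff r t) t = smult (coeff r t) (monom 1 t * a)"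
      proof -
        fix t
        have "smult (coeff r t) (monom 1 t * a) = smult (coeff r t) (monom 1 t) * a" by simp
        also have "smult (coeff r t) (monom 1 t) = monom (coeff r t) t" by (simp add: smult_monom)
        finally show "a * monom (coeff r t) t = smult (coeff r t) (monom 1 t * a)" by (simp add: mult.commute)
      qed
      then show ?thesis by (simp add: sum_distrib_left)
    qed
    finally show ?thesis by simp
  qed
  also have "pseudo_mod (a * r) p = pseudo_mod (a * (monom 1 k * b)) p" unfolding r_def by (rule pmod_mult_mod[OF p])
  finally show "multmat p (a * b) $$ (s,k) = (multmat p a * multmat p b) $$ (s,k)"
    using s k by (simp add: multmat_def ac_simps)
qed (auto simp: multmat_def)

lemma resultant_mult_right:
  fixes p a b :: "'a::idom poly"
  assumes p: "lead_coeff p = 1"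
  shows "resultant p (a * b) = resultant p a * resultant p b"
  unfolding resultant_multmat[OF p] multmat_mult[OF p]
  by (rule det_mult[of _ "degree p"]) (auto simp: multmat_def)

lemma monic_prod_list:
  fixes qs :: "'a::idom poly list"
  assumes "\<forall>q\<in>set qs. lead_coeff q = 1"
  shows "lead_coeff (prod_list qs) = 1"
  using assms by (induction qs) (auto simp: lead_coeff_mult)

lemma degree_prod_list_monic:
  fixes qs :: "'a::idom poly list"
  assumes "\<forall>q\<in>set qs. lead_coeff q = 1"
  shows "degree (prod_list qs) = sum_list (map degree qs)"
  by (rule degree_prod_list_eq) (use assms in auto)

lemma resultant_prod_left:
  fixes g :: "'a::idom poly" and qs :: "'a poly list"
  assumes g: "lead_coeff g = 1" and qs: "\<forall>q\<in>set qs. lead_coeff q = 1"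
  shows "resultant (prod_list qs) g = prod_list (map (\<lambda>f. resultant f g) qs)"
  using qs
proof (induction qs)
  case Nil then show ?case by simp
next
  case (Cons q qs)
  have q: "lead_coeff q = 1" and Q: "lead_coeff (prod_list qs) = 1"
    using Cons.prems monic_prod_list[of qs] by auto
  have dqQ: "degree (q * prod_list qs) = degree q + degree (prod_list qs)"
  proof -
    from Q have Q0: "prod_list qs \<noteq> 0" by (metis leading_coeff_0_iff zero_neq_one)
    from q have q0: "q \<noteq> 0" by (metis leading_coeff_0_iff zero_neq_one)
    show ?thesis by (rule degree_mult_eq[OF q0 Q0])
  qed
  have "resultant (q * prod_list qs) g = (-1)^(degree (q * prod_list qs) * degree g) * resultant g (q * prod_list qs)"
    by (rule resultant_swap)
  also have "\<dots> = ((-1)^(degree q * degree g) * resultant g q) * ((-1)^(degree (prod_list qs) * degree g) * resultant g (prod_list qs))"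
    unfolding resultant_mult_right[OF g] dqQ by (simp add: algebra_simps power_add)
  also have "\<dots> = resultant q g * resultant (prod_list qs) g"
    using resultant_swap[of q g] resultant_swap[of "prod_list qs" g] by (simp add: ac_simps)
  finally show ?case using Cons by simp
qed


lemma block_off_0[simp]: "block_off fs 0 = 0" by (simp add: block_off_def)

lemma block_off_Cons_Suc[simp]: "block_off (g # gs) (Suc i) = degree g + block_off gs i"
  by (simp add: block_off_def)

lemma block_off_mono: "i \<le> j \<Longrightarrow> block_off fs i \<le> block_off fs j"
proof (induction fs arbitrary: i j)
  case Nil then show ?case by (simp add: block_off_def)
next
  case (Cons g gs)
  then show ?case
    by (cases i; cases j) auto
qed

lemma blk_exists:
  "r < sum_list (map degree fs) \<Longrightarrow> \<exists>i<length fs. block_off fs i \<le> r \<and> r < block_off fs (Suc i)"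
proof (induction fs arbitrary: r)
  case Nil then show ?case by simp
next
  case (Cons g gs)
  show ?case
  proof (cases "r < degree g")
    case True then show ?thesis by (intro exI[of _ 0]) auto
  next
    case False
    then have "r - degree g < sum_list (map degree gs)" using Cons.prems by auto
    from Cons.IH[OF this] obtain i where "i < length gs" "block_off gs i \<le> r - degree g"
      "r - degree g < block_off gs (Suc i)" by blast
    then show ?thesis using False by (intro exI[of _ "Suc i"]) auto
  qed
qed

lemma blk_unique:
  assumes "block_off fs i \<le> r" "r < block_off fs (Suc i)" "block_off fs j \<le> r" "r < block_off fs (Suc j)"
  shows "i = j"
proof (rule ccontr)
  assume "i \<noteq> j"
  then have "Suc i \<le> j \<or> Suc j \<le> i" by auto
  then show False using block_off_mono[of "Suc i" j fs] block_off_mono[of "Suc j" i fs] assms by auto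
qed

definition blk :: "'a::zero poly list \<Rightarrow> nat \<Rightarrow> nat" where
  "blk fs r = (THE i. i < length fs \<and> block_off fs i \<le> r \<and> r < block_off fs (Suc i))"

lemma blk_eq:
  assumes "i < length fs" "block_off fs i \<le> r" "r < block_off fs (Suc i)"
  shows "blk fs r = i"
  unfolding blk_def by (rule the_equality) (use assms blk_unique in blast)+

lemma blk_spec:
  assumes "r < sum_list (map degree fs)"
  shows "blk fs r < length fs" "block_off fs (blk fs r) \<le> r" "r < block_off fs (Suc (blk fs r))"
proof -
  from blk_exists[OF assms] obtain i where "i < length fs" "block_off fs i \<le> r" "r < block_off fs (Suc i)" by blast
  moreover then have "blk fs r = i" by (rule blk_eq)
  ultimately show "blk fs r < length fs" "block_off fs (blk fs r) \<le> r" "r < block_off fs (Suc (blk fs r))" by auto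
qed

definition psi_entry :: "'a::idom poly list \<Rightarrow> nat \<Rightarrow> 'a poly \<Rightarrow> 'a" where
  "psi_entry fs r h = coeff (pseudo_mod h (fs ! blk fs r)) (r - block_off fs (blk fs r))"

lemma psi_mat_carrier: "psi_mat fs \<in> carrier_mat (sum_list (map degree fs)) (sum_list (map degree fs))"
  by (simp add: psi_mat_def)

lemma psi_mat_index:
  assumes "r < sum_list (map degree fs)" "c < sum_list (map degree fs)"
  shows "psi_mat fs $$ (r,c) = psi_entry fs r (monom 1 c)"
  using assms by (simp add: psi_mat_def psi_entry_def blk_def Let_def)

lemma psi_entry_Cons1:
  assumes "r < degree g"
  shows "psi_entry (g # gs) r h = coeff (pseudo_mod h g) r"
proof -
  have "blk (g # gs) r = 0" by (rule blk_eq) (use assms in auto)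
  then show ?thesis by (simp add: psi_entry_def)
qed

lemma psi_entry_Cons2:
  assumes "r < sum_list (map degree gs)"
  shows "psi_entry (g # gs) (degree g + r) h = psi_entry gs r h"
proof -
  note sp = blk_spec[OF assms]
  have "blk (g # gs) (degree g + r) = Suc (blk gs r)" by (rule blk_eq) (use sp in auto)
  then show ?thesis by (simp add: psi_entry_def)
qed

lemma psi_monic:
  assumes monic: "\<forall>g \<in> set fs. lead_coeff g = 1" and r: "r < sum_list (map degree fs)"
  shows "lead_coeff (fs ! blk fs r) = 1"
  using monic blk_spec(1)[OF r] by auto

lemma psi_lin:
  fixes fs :: "'a::idom poly list"
  assumes monic: "\<forall>g \<in> set fs. lead_coeff g = 1" and r: "r < sum_list (map degree fs)"
    and h: "\<forall>s\<ge>N. coeff h s = 0"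
  shows "(\<Sum>s<N. psi_entry fs r (monom 1 s) * coeff h s) = psi_entry fs r h"
proof -
  let ?f = "fs ! blk fs r" and ?o = "r - block_off fs (blk fs r)"
  note f = psi_monic[OF monic r]
  have "h = (\<Sum>s<N. monom (coeff h s) s)" by (rule poly_sum_monom[OF h])
  also have "\<dots> = (\<Sum>s<N. smult (coeff h s) (monom 1 s))" by (simp add: smult_monom)
  finally have eq: "h = (\<Sum>s<N. smult (coeff h s) (monom 1 s))" .
  have "pseudo_mod (\<Sum>s<N. smult (coeff h s) (monom 1 s)) ?f = (\<Sum>s<N. smult (coeff h s) (pseudo_mod (monom 1 s) ?f))"
    by (simp add: pmod_sum[OF f] pmod_smult[OF f])
  then have "pseudo_mod h ?f = (\<Sum>s<N. smult (coeff h s) (pseudo_mod (monom 1 s) ?f))"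
    unfolding eq[symmetric] .
  then show ?thesis by (simp add: psi_entry_def coeff_sum mult.commute)
qed

lemma psi_mod:
  fixes fs :: "'a::idom poly list"
  assumes monic: "\<forall>g \<in> set fs. lead_coeff g = 1" and r: "r < sum_list (map degree fs)"
  shows "psi_entry fs r (pseudo_mod h (prod_list fs)) = psi_entry fs r h"
proof -
  note f = psi_monic[OF monic r]
  have dv: "fs ! blk fs r dvd prod_list fs" by (rule prod_list_dvd) (use blk_spec(1)[OF r] in auto)
  show ?thesis unfolding psi_entry_def pmod_mod_dvd[OF f monic_prod_list[OF monic] dv] ..
qed

lemma prod_list_nth: "prod_list (map f xs) = (\<Prod>j<length xs. f (xs ! j))"
  by (induction xs) (auto simp del: prod.lessThan_Suc simp add: prod.lessThan_Suc_shift)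


theorem theoremA3:
  fixes fs :: "'a::idom poly list"
  assumes monic: "\<forall>g \<in> set fs. lead_coeff g = 1"
  shows "det (psi_mat fs) = (\<Prod>j < length fs. \<Prod>i < j. resultant (fs ! j) (fs ! i))"
  using monic
proof (induction fs)
  case Nil
  have "det (psi_mat ([] :: 'a poly list)) = prod_list (diag_mat (psi_mat ([] :: 'a poly list)))"
    by (rule det_lower_triangular[OF _ psi_mat_carrier]) auto
  then show ?case by (simp add: diag_mat_def psi_mat_def)
next
  case (Cons g gs)
  have g: "lead_coeff g = 1" and gsm: "\<forall>f\<in>set gs. lead_coeff f = 1" using Cons.prems by auto
  define dg where "dg = degree g"
  define dG where "dG = sum_list (map degree gs)"
  define N where "N = dg + dG"
  define G where "G = prod_list gs"
  have G: "lead_coeff G = 1" unfolding G_def by (rule monic_prod_list[OF gsm])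
  have dGG: "degree G = dG" unfolding G_def dG_def by (rule degree_prod_list_monic[OF gsm])
  have DN: "sum_list (map degree (g # gs)) = N" by (simp add: N_def dg_def dG_def)
  have P: "psi_mat (g # gs) \<in> carrier_mat N N" using psi_mat_carrier[of "g # gs"] unfolding DN .
  have PG: "psi_mat gs \<in> carrier_mat dG dG" using psi_mat_carrier[of gs] unfolding dG_def .
  define u where "u c = (if c < dg then monom 1 c else monom 1 (c - dg) * g)" for c
  have ucoeff: "coeff (u c) s = 0" if "c < s" for c s
  proof (cases "c < dg")
    case True then show ?thesis using that by (simp add: u_def coeff_monom)
  next
    case False
    then have "s - (c - dg) > degree g" using that by (auto simp: dg_def)
    then show ?thesis using False by (auto simp: u_def coeff_monom_mult dg_def intro: coeff_eq_0)
  qed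
  have udiag: "coeff (u c) c = 1" for c
  proof (cases "c < dg")
    case True then show ?thesis by (simp add: u_def)
  next
    case False
    then have "c - (c - dg) = degree g" by (auto simp: dg_def)
    then show ?thesis using False g by (auto simp: u_def coeff_monom_mult)
  qed
  define U where "U = (mat N N (\<lambda>(s,c). coeff (u c) s) :: 'a mat)"
  have U: "U \<in> carrier_mat N N" by (simp add: U_def)
  have detU: "det U = 1"
  proof -
    have ut: "upper_triangular U" unfolding upper_triangular_def U_def using ucoeff by auto
    have "det U = prod_list (diag_mat U)" by (rule det_upper_triangular[OF ut U])
    also have "\<dots> = (\<Prod>i = 0 ..< N. U $$ (i,i))" by (simp add: prod_list_diag_prod U_def)
    also have "\<dots> = (\<Prod>i = 0 ..< N. 1)" by (rule prod.cong) (auto simp: U_def udiag)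
    finally show ?thesis by simp
  qed
  have PUentry: "(psi_mat (g # gs) * U) $$ (r,c) = psi_entry (g # gs) r (u c)" if r: "r < N" and c: "c < N" for r c
  proof -
    have "(psi_mat (g # gs) * U) $$ (r,c) = (\<Sum>s<N. psi_mat (g # gs) $$ (r,s) * U $$ (s,c))"
      by (rule mult_mat_index_sum[OF P U r c])
    also have "\<dots> = (\<Sum>s<N. psi_entry (g # gs) (r) (monom 1 s) * coeff (u c) s)"
    proof (rule sum.cong[OF refl])
      fix s assume "s \<in> {..<N}"
      then have s: "s < sum_list (map degree (g # gs))" unfolding DN by simp
      have r': "r < sum_list (map degree (g # gs))" unfolding DN by (rule r)
      show "psi_mat (g # gs) $$ (r,s) * U $$ (s,c) = psi_entry (g # gs) r (monom 1 s) * coeff (u c) s"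
        unfolding psi_mat_index[OF r' s] using s c DN by (simp add: U_def)
    qed
    also have "\<dots> = psi_entry (g # gs) r (u c)"
      by (rule psi_lin) (use Cons.prems r c ucoeff in \<open>auto simp: N_def dg_def dG_def\<close>)
    finally show ?thesis .
  qed
  define M where "M = multmat G g"
  have M: "M \<in> carrier_mat dG dG" by (simp add: M_def multmat_def dGG)
  define A3 where "A3 = (mat dG dg (\<lambda>(r,c). psi_entry gs r (monom 1 c)) :: 'a mat)"
  define A4 where "A4 = psi_mat gs * M"
  have A3: "A3 \<in> carrier_mat dG dg" by (simp add: A3_def)
  have A4: "A4 \<in> carrier_mat dG dG" using PG M by (simp add: A4_def)
  have A4entry: "A4 $$ (r,k) = psi_entry gs r (monom 1 k * g)" if r: "r < dG" and k: "k < dG" for r k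
  proof -
    have "A4 $$ (r,k) = (\<Sum>s<dG. psi_mat gs $$ (r,s) * M $$ (s,k))"
      unfolding A4_def by (rule mult_mat_index_sum[OF PG M r k])
    also have "\<dots> = (\<Sum>s<dG. psi_entry gs r (monom 1 s) * coeff (pseudo_mod (monom 1 k * g) G) s)"
      by (rule sum.cong) (use r k in \<open>auto simp: M_def multmat_def dGG psi_mat_index dG_def\<close>)
    also have "\<dots> = psi_entry gs r (pseudo_mod (monom 1 k * g) G)"
    proof (rule psi_lin[OF gsm])
      show "r < sum_list (map degree gs)" using r by (simp add: dG_def)
      show "\<forall>s\<ge>dG. coeff (pseudo_mod (monom 1 k * g) G) s = 0"
        using pmod_spec(2)[OF G, of "monom 1 k * g"] dGG by (auto intro: coeff_eq_0)
    qed
    also have "\<dots> = psi_entry gs r (monom 1 k * g)"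
      unfolding G_def by (rule psi_mod[OF gsm]) (use r in \<open>simp add: dG_def\<close>)
    finally show ?thesis .
  qed
  have PUblock: "psi_mat (g # gs) * U = four_block_mat (1\<^sub>m dg) (0\<^sub>m dg dG) A3 A4"
  proof (rule eq_matI)
    fix r c assume "r < dim_row (four_block_mat (1\<^sub>m dg) (0\<^sub>m dg dG) A3 A4)"
      "c < dim_col (four_block_mat (1\<^sub>m dg) (0\<^sub>m dg dG) A3 A4)"
    then have r: "r < N" and c: "c < N" using A4 by (auto simp: N_def)
    have "(psi_mat (g # gs) * U) $$ (r,c) = psi_entry (g # gs) r (u c)" by (rule PUentry[OF r c])
    also have "\<dots> = four_block_mat (1\<^sub>m dg) (0\<^sub>m dg dG) A3 A4 $$ (r,c)"
    proof (cases "r < dg")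
      case True
      then have e: "psi_entry (g # gs) r (u c) = coeff (pseudo_mod (u c) g) r"
        by (intro psi_entry_Cons1) (simp add: dg_def)
      show ?thesis
      proof (cases "c < dg")
        case True2: True
        have "pseudo_mod (u c) g = monom 1 c"
          using True2 by (simp add: u_def pmod_small[OF g] degree_monom_eq dg_def)
        then show ?thesis using True True2 r c A4 e by (simp add: N_def)
      next
        case False2: False
        have "pseudo_mod (u c) g = 0" using False2 by (simp add: u_def pmod_multiple[OF g])
        then show ?thesis using True False2 r c A4 e by (simp add: N_def)
      qed
    next
      case False
      have rr: "r - dg < sum_list (map degree gs)" using r False by (simp add: N_def dG_def)
      have e: "psi_entry (g # gs) r (u c) = psi_entry gs (r - dg) (u c)"
        using psi_entry_Cons2[OF rr, of g "u c"] False by (simp add: dg_def)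
      show ?thesis
      proof (cases "c < dg")
        case True2: True
        then show ?thesis using False True2 r c A4 e by (simp add: N_def A3_def u_def)
      next
        case False2: False
        have "A4 $$ (r - dg, c - dg) = psi_entry gs (r - dg) (monom 1 (c - dg) * g)"
          by (rule A4entry) (use r c False False2 in \<open>auto simp: N_def\<close>)
        then show ?thesis using False False2 r c A4 e by (simp add: N_def u_def)
      qed
    qed
    finally show "(psi_mat (g # gs) * U) $$ (r,c) = four_block_mat (1\<^sub>m dg) (0\<^sub>m dg dG) A3 A4 $$ (r,c)" .
  qed (use P U A4 in \<open>auto simp: N_def\<close>)
  have "det (psi_mat (g # gs)) = det (psi_mat (g # gs) * U)" using det_mult[OF P U] detU by simp
  also have "\<dots> = det (1\<^sub>m dg :: 'a mat) * det A4" unfolding PUblock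
    by (rule det_four_block_mat_upper_right_zero[OF _ refl A3 A4]) simp
  also have "\<dots> = det (psi_mat gs) * det M" unfolding A4_def using det_mult[OF PG M] by simp
  also have "det M = resultant G g" unfolding M_def by (rule resultant_multmat[OF G, symmetric])
  also have "\<dots> = (\<Prod>j<length gs. resultant (gs ! j) g)"
    unfolding G_def resultant_prod_left[OF g gsm] by (rule prod_list_nth)
  also have "det (psi_mat gs) = (\<Prod>j<length gs. \<Prod>i<j. resultant (gs ! j) (gs ! i))" by (rule Cons.IH[OF gsm])
  finally show ?case
    by (simp del: prod.lessThan_Suc add: prod.lessThan_Suc_shift prod.distrib ac_simps)
qed

end
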